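(* Let $(N_r)_{r\in\mathbb{Z}}$ be the Narayana sequence. For every integer $a$ put $p_a=N_a+3N_{a-2}$, and for positive integers $a$ put $q_a=-p_{-a}$. Then for every positive integer $a$ and every integer $m$ with $a<m$, $$N_{m}=p_{a}N_{m-a}+q_{a}N_{m-2a}+N_{m-3a}.$$
   Context: The Narayana sequence $(N_r)_{r\in\mathbb{Z}}$ is defined by $N_0=0$, $N_1=N_2=1$ and $N_r=N_{r-1}+N_{r-3}$ for all integers $r$ (extended to negative indices via $N_{r-3}=N_r-N_{r-1}$). *)

theory Defs
  imports Main
begin

fun narayana_nat :: "nat \<Rightarrow> int" where
  "narayana_nat 0 = 0"
| "narayana_nat (Suc 0) = 1"
| "narayana_nat (Suc (Suc 0)) = 1"
| "narayana_nat (Suc (Suc (Suc n))) = narayana_nat (Suc (Suc n)) + narayana_nat n"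

text \<open>Narayana numbers at nonpositive indices: narayana_neg k = N_(-k), obtained from
  N_(r-3) = N_r - N_(r-1): N_0 = 0, N_(-1) = N_2 - N_1 = 0, N_(-2) = N_1 - N_0 = 1,
  N_(-(k+3)) = N_(-k) - N_(-(k+1)).\<close>
fun narayana_neg :: "nat \<Rightarrow> int" where
  "narayana_neg 0 = 0"
| "narayana_neg (Suc 0) = 0"
| "narayana_neg (Suc (Suc 0)) = 1"
| "narayana_neg (Suc (Suc (Suc k))) = narayana_neg k - narayana_neg (Suc k)"

definition narayana :: "int \<Rightarrow> int" where
  "narayana r = (if r \<ge> 0 then narayana_nat (nat r) else narayana_neg (nat (- r)))"

definition narP :: "int \<Rightarrow> int" where
  "narP a = narayana a + 3 * narayana (a - 2)"

definition narQ :: "int \<Rightarrow> int" where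
  "narQ a = - narP (- a)"

end

theory Submission
  imports Defs
begin


lemma rec3: "narayana (r + 3) = narayana (r + 2) + narayana r"
proof (cases "r \<ge> 0")
  case True
  then obtain n where n: "r = int n" by (metis nonneg_eq_int)
  have "nat (int n + 3) = Suc (Suc (Suc n))" "nat (int n + 2) = Suc (Suc n)" by auto
  then show ?thesis using n by (simp add: narayana_def)
next
  case False
  then consider "r = -1" | "r = -2" | "r = -3" | "r \<le> -4" by linarith
  then show ?thesis
  proof cases
    case 4
    define k where "k = nat (- r - 4)"
    have k: "r = - int k - 4" using 4 unfolding k_def by simp
    have e1: "nat (- (r+3)) = Suc k" "nat (- (r+2)) = Suc (Suc k)" "nat (-r) = Suc (Suc (Suc (Suc k)))"
      using k by auto
    have "r + 3 < 0" "r + 2 < 0" "r < 0" using k by auto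
    then show ?thesis using e1 by (simp add: narayana_def)
  qed (auto simp: narayana_def numeral_eq_Suc)
qed

lemma rec_at: "s = r + 3 \<Longrightarrow> t = r + 2 \<Longrightarrow> narayana s = narayana t + narayana r"
  using rec3 by simp

lemma vals: "narayana 0 = 0" "narayana 1 = 1" "narayana 2 = 1"
  "narayana (-1) = 0" "narayana (-2) = 1" "narayana (-3) = 0"
  by (auto simp: narayana_def numeral_eq_Suc)

lemma uniq:
  fixes f :: "int \<Rightarrow> int"
  assumes r: "\<And>r. f (r + 3) = f (r + 2) + f r"
    and z: "f c = 0" "f (c+1) = 0" "f (c+2) = 0"
  shows "f x = 0"
proof -
  have "f x = 0 \<and> f (x+1) = 0 \<and> f (x+2) = 0"
  proof (induction x rule: int_induct[where k = c])
    case base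
    then show ?case using z by simp
  next
    case (step1 i)
    then show ?case using r[of i] by (simp add: add.assoc)
  next
    case (step2 i)
    have "f (i - 1 + 3) = f (i - 1 + 2) + f (i - 1)" by (rule r)
    then show ?case using step2 by (simp add: algebra_simps)
  qed
  then show ?thesis by simp
qed

lemma addf: "narayana (r + n) = narayana n * narayana (r - 2) + narayana (n + 1) * narayana (r - 3)
   + narayana (n + 2) * narayana (r - 1)"
proof -
  let ?f = "\<lambda>r. narayana (r + n) - (narayana n * narayana (r - 2) + narayana (n + 1) * narayana (r - 3)
   + narayana (n + 2) * narayana (r - 1))"
  have "?f r = 0"
  proof (rule uniq[where f = ?f and c = 0 and x = r])
    fix r
    have a: "narayana (r + 3 + n) = narayana (r + 2 + n) + narayana (r + n)" by (rule rec_at) auto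
    have b: "narayana (r + 3 - 2) = narayana (r + 2 - 2) + narayana (r - 2)" by (rule rec_at) auto
    have c: "narayana (r + 3 - 3) = narayana (r + 2 - 3) + narayana (r - 3)" by (rule rec_at) auto
    have d: "narayana (r + 3 - 1) = narayana (r + 2 - 1) + narayana (r - 1)" by (rule rec_at) auto
    show "?f (r + 3) = ?f (r + 2) + ?f r" apply (simp only: a b c d) by (simp add: algebra_simps)
  qed (auto simp: vals add.commute)
  then show ?thesis by simp
qed

definition dK :: "int \<Rightarrow> int \<Rightarrow> int \<Rightarrow> int" where
 "dK x y z = (-x+y)*((-x+y)*y - x*(-y+z)) - (x+y-z)*((-y+z)*y - x*x) + (-y+z)*((-y+z)*(-y+z) - (-x+y)*x)"

lemma dK_shift: "dK y z (z+x) = dK x y z" unfolding dK_def by (simp add: algebra_simps)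

lemma dK_one: "dK (narayana a) (narayana (a+1)) (narayana (a+2)) = 1"
proof (induction a rule: int_induct[where k = 0])
  case base
  then show ?case by (simp add: vals dK_def)
next
  case (step1 i)
  have e: "narayana (i + 1 + 2) = narayana (i + 2) + narayana i" by (rule rec_at) auto
  have g: "i + 1 + 1 = i + 2" by simp
  show ?case unfolding g e using dK_shift[where x="narayana i" and y="narayana (i+1)" and z="narayana (i+2)"] step1
    by simp
next
  case (step2 i)
  have e: "narayana (i + 2) = narayana (i + 1) + narayana (i - 1)" by (rule rec_at) auto
  have g: "i - 1 + 1 = i" "i - 1 + 2 = i + 1" by simp_all
  show ?case unfolding g using dK_shift[where x="narayana (i - 1)" and y="narayana i" and z="narayana (i + 1)"] step2
    unfolding e by simp
qed

lemma solve:
  fixes x y z u v w :: int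
  assumes c0: "0 = x*(v-u) + y*(u-w+v) + z*(w-v)"
  and c1: "1 = x*(w-v) + y*(v-u) + z*u"
  and c2: "1 = x*u + y*(w-v) + z*v"
  and d: "dK x y z = 1"
  shows "u = (-((x+y-z)*y - (z-y)*(z-y))) + ((x+y-z)*x - (z-y)*(y-x))" "v = ((y-x)*y - (z-y)*x) + (-((y-x)*x - (z-y)*(z-y)))" "w = (-((y-x)*(z-y) - (x+y-z)*x)) + ((y-x)*(y-x) - (x+y-z)*(z-y))"
proof -
  have e0: "dK x y z * u = ((y-x)*y - x*(z-y)) * (x*(v-u) + y*(u-w+v) + z*(w-v)) + (-((x+y-z)*y - (z-y)*(z-y))) * (x*(w-v) + y*(v-u) + z*u) + ((x+y-z)*x - (z-y)*(y-x)) * (x*u + y*(w-v) + z*v)"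
    unfolding dK_def by (simp add: algebra_simps)
  have e1: "dK x y z * v = (-((z-y)*y - x*x)) * (x*(v-u) + y*(u-w+v) + z*(w-v)) + ((y-x)*y - (z-y)*x) * (x*(w-v) + y*(v-u) + z*u) + (-((y-x)*x - (z-y)*(z-y))) * (x*u + y*(w-v) + z*v)"
    unfolding dK_def by (simp add: algebra_simps)
  have e2: "dK x y z * w = ((z-y)*(z-y) - (y-x)*x) * (x*(v-u) + y*(u-w+v) + z*(w-v)) + (-((y-x)*(z-y) - (x+y-z)*x)) * (x*(w-v) + y*(v-u) + z*u) + ((y-x)*(y-x) - (x+y-z)*(z-y)) * (x*u + y*(w-v) + z*v)"
    unfolding dK_def by (simp add: algebra_simps)
  show "u = (-((x+y-z)*y - (z-y)*(z-y))) + ((x+y-z)*x - (z-y)*(y-x))" using e0 unfolding d c0[symmetric] c1[symmetric] c2[symmetric] by simp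
  show "v = ((y-x)*y - (z-y)*x) + (-((y-x)*x - (z-y)*(z-y)))" using e1 unfolding d c0[symmetric] c1[symmetric] c2[symmetric] by simp
  show "w = (-((y-x)*(z-y) - (x+y-z)*x)) + ((y-x)*(y-x) - (x+y-z)*(z-y))" using e2 unfolding d c0[symmetric] c1[symmetric] c2[symmetric] by simp
qed

lemma alg0:
  fixes x y z u v w :: int
  assumes c0: "0 = x*(v-u) + y*(u-w+v) + z*(w-v)"
  and c1: "1 = x*(w-v) + y*(v-u) + z*u"
  and c2: "1 = x*u + y*(w-v) + z*v"
  and d: "dK x y z = 1"
  shows "x*(y-x) + y*(x-(z-y)) + z*(z-y) = (x+3*(y-x))*x + (-(u+3*(v-u)))*0 + u"
  unfolding solve[OF c0 c1 c2 d] by (simp add: algebra_simps)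

lemma alg1:
  fixes x y z u v w :: int
  assumes c0: "0 = x*(v-u) + y*(u-w+v) + z*(w-v)"
  and c1: "1 = x*(w-v) + y*(v-u) + z*u"
  and c2: "1 = x*u + y*(w-v) + z*v"
  and d: "dK x y z = 1"
  shows "x*(z-y) + y*(y-x) + z*x = (x+3*(y-x))*y + (-(u+3*(v-u)))*1 + v"
  unfolding solve[OF c0 c1 c2 d] by (simp add: algebra_simps)

lemma alg2:
  fixes x y z u v w :: int
  assumes c0: "0 = x*(v-u) + y*(u-w+v) + z*(w-v)"
  and c1: "1 = x*(w-v) + y*(v-u) + z*u"
  and c2: "1 = x*u + y*(w-v) + z*v"
  and d: "dK x y z = 1"
  shows "x*x + y*(z-y) + z*y = (x+3*(y-x))*z + (-(u+3*(v-u)))*1 + w"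
  unfolding solve[OF c0 c1 c2 d] by (simp add: algebra_simps)

lemma addf_at: "s = r + n \<Longrightarrow> r2 = r - 2 \<Longrightarrow> r3 = r - 3 \<Longrightarrow> r1 = r - 1 \<Longrightarrow>
  n1 = n + 1 \<Longrightarrow> n2 = n + 2 \<Longrightarrow>
  narayana s = narayana n * narayana r2 + narayana n1 * narayana r3 + narayana n2 * narayana r1"
  using addf by simp

theorem theorem3:
  fixes a m :: int
  assumes "0 < a" and "a < m"
  shows "narayana m = narP a * narayana (m - a) + narQ a * narayana (m - 2 * a)
                      + narayana (m - 3 * a)"
proof -
  define x where "x = narayana a"
  define y where "y = narayana (a + 1)"
  define z where "z = narayana (a + 2)"
  define u where "u = narayana (- a)"
  define v where "v = narayana (- a + 1)"
  define w where "w = narayana (- a + 2)"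
  have A1: "narayana (a - 1) = z - y" unfolding y_def z_def using rec_at[of "a + 2" "a - 1" "a + 1"] by simp
  have A2: "narayana (a - 2) = y - x" unfolding y_def x_def using rec_at[of "a + 1" "a - 2" "a"] by simp
  have A3: "narayana (a - 3) = x - (z - y)" unfolding x_def using rec_at[of "a" "a - 3" "a - 1"] A1 by simp
  have B1: "narayana (- a - 1) = w - v" unfolding w_def v_def using rec_at[of "- a + 2" "- a - 1" "- a + 1"] by simp
  have B2: "narayana (- a - 2) = v - u" unfolding v_def u_def using rec_at[of "- a + 1" "- a - 2" "- a"] by simp
  have B3: "narayana (- a - 3) = u - (w - v)" unfolding u_def using rec_at[of "- a" "- a - 3" "- a - 1"] B1 by simp
  have c0: "0 = x*(v-u) + y*(u-(w-v)) + z*(w-v)"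
    using addf_at[of 0 "- a" a "- a - 2" "- a - 3" "- a - 1" "a + 1" "a + 2"] B1 B2 B3
    unfolding x_def y_def z_def by (simp add: vals)
  have c1: "1 = x*(w-v) + y*(v-u) + z*u"
    using addf_at[of 1 "- a + 1" a "- a - 1" "- a - 2" "- a" "a + 1" "a + 2"] B1 B2 B3
    unfolding x_def y_def z_def u_def by (simp add: vals)
  have c2: "1 = x*u + y*(w-v) + z*v"
    using addf_at[of 2 "- a + 2" a "- a" "- a - 1" "- a + 1" "a + 1" "a + 2"] B1 B2 B3
    unfolding x_def y_def z_def u_def v_def by (simp add: vals)
  have d: "dK x y z = 1" unfolding x_def y_def z_def by (rule dK_one)
  have c0': "0 = x*(v-u) + y*(u-w+v) + z*(w-v)" using c0 by (simp add: algebra_simps)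
  note al = alg0[OF c0' c1 c2 d] alg1[OF c0' c1 c2 d] alg2[OF c0' c1 c2 d]
  have P: "narP a = x + 3 * (y - x)" unfolding narP_def using A2 x_def by simp
  have Q: "narQ a = - (u + 3 * (v - u))" unfolding narQ_def narP_def using B2 u_def by simp
  let ?f = "\<lambda>m. narayana m - (narP a * narayana (m - a) + narQ a * narayana (m - 2 * a)
                      + narayana (m - 3 * a))"
  have "?f m = 0"
  proof (rule uniq[where f = ?f and c = "2 * a" and x = m])
    fix r
    have e1: "narayana (r + 3) = narayana (r + 2) + narayana r" by (rule rec_at) auto
    have e2: "narayana (r + 3 - a) = narayana (r + 2 - a) + narayana (r - a)" by (rule rec_at) auto
    have e3: "narayana (r + 3 - 2 * a) = narayana (r + 2 - 2 * a) + narayana (r - 2 * a)" by (rule rec_at) auto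
    have e4: "narayana (r + 3 - 3 * a) = narayana (r + 2 - 3 * a) + narayana (r - 3 * a)" by (rule rec_at) auto
    show "?f (r + 3) = ?f (r + 2) + ?f r" apply (simp only: e1 e2 e3 e4) by (simp add: algebra_simps)
  next
    have t: "narayana (2 * a) = x*(y-x) + y*(x-(z-y)) + z*(z-y)"
      using addf_at[of "2 * a" a a "a - 2" "a - 3" "a - 1" "a + 1" "a + 2"] A1 A2 A3
      unfolding x_def y_def z_def by simp
    have i: "2 * a - a = a" "2 * a - 2 * a = 0" "2 * a - 3 * a = - a" by simp_all
    show "?f (2 * a) = 0" unfolding i t P Q using al(1) by (simp add: vals u_def x_def)
  next
    have t: "narayana (2 * a + 1) = x*(z-y) + y*(y-x) + z*x"
      using addf_at[of "2 * a + 1" "a + 1" a "a - 1" "a - 2" "a" "a + 1" "a + 2"] A1 A2 A3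
      unfolding x_def y_def z_def by simp
    have i: "2 * a + 1 - a = a + 1" "2 * a + 1 - 2 * a = 1" "2 * a + 1 - 3 * a = - a + 1" by simp_all
    show "?f (2 * a + 1) = 0" unfolding i t P Q using al(2) by (simp add: vals v_def y_def)
  next
    have t: "narayana (2 * a + 2) = x*x + y*(z-y) + z*y"
      using addf_at[of "2 * a + 2" "a + 2" a "a" "a - 1" "a + 1" "a + 1" "a + 2"] A1 A2 A3
      unfolding x_def y_def z_def by simp
    have i: "2 * a + 2 - a = a + 2" "2 * a + 2 - 2 * a = 2" "2 * a + 2 - 3 * a = - a + 2" by simp_all
    show "?f (2 * a + 2) = 0" unfolding i t P Q using al(3) by (simp add: vals w_def z_def)
  qed
  then show ?thesis by simp
qed

thm_deps theorem3

end
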